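(* Let $0\le\Delta'\le\Delta\le1/8$ with $\Delta>0$, let $\xi\ge100$ be such that $m=\Delta^{-2}/\xi$ is a positive integer, let $\mathcal{D}=\mathcal{B}(1/2+\Delta)^{\otimes m}$ and $\mathcal{D}'=\mathcal{B}(1/2+\Delta')^{\otimes m}$, where $\mathcal{B}(\mu)$ is the Bernoulli distribution with mean $\mu$. Let $\mathcal{X}$ be any probability distribution on a sample space $X$. Then for any event $A\subseteq\{0,1\}^m\times X$ with $\Pr_{\mathcal{D}\otimes\mathcal{X}}[A]\le\gamma$, and any $Q\ge\xi$, $$\Pr_{\mathcal{D}'\otimes\mathcal{X}}[A]\le\gamma\cdot\exp\!\left(5\sqrt{(3\ln Q)/\xi}\right)+Q^{-6}.$$ *)

theory Defs
  imports "HOL-Probability.Probability"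
begin

text \<open>The product Bernoulli distribution B(mu)^(tensor m) on {0,1}^m, where a point of
  {0,1}^m is represented as a function nat => bool that is False outside {0..<m}.\<close>
definition bern_prod :: "nat \<Rightarrow> real \<Rightarrow> (nat \<Rightarrow> bool) pmf" where
  "bern_prod m \<mu> = Pi_pmf {0..<m} False (\<lambda>_. bernoulli_pmf \<mu>)"

end

theory Submission
  imports Defs
begin


lemma pair_pmf_measure:
  assumes M: "prob_space M" and A: "A \<in> sets (measure_pmf p \<Otimes>\<^sub>M M)"
    and S: "finite S" "set_pmf p \<subseteq> S"
  shows "measure (measure_pmf p \<Otimes>\<^sub>M M) A = (\<Sum>x\<in>S. pmf p x * measure M (Pair x -` A))"
proof -
  interpret prob_space M by fact
  have fin: "finite (set_pmf p)" using S finite_subset by blast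
  have sl: "Pair x -` A \<in> sets M" for x
    using A by (metis measurable_Pair2' sets_Pair1 space_measure_pmf UNIV_I)
  have "emeasure (measure_pmf p \<Otimes>\<^sub>M M) A = (\<integral>\<^sup>+x. emeasure M (Pair x -` A) \<partial>measure_pmf p)"
    by (rule emeasure_pair_measure_alt[OF A])
  also have "\<dots> = (\<Sum>x\<in>set_pmf p. emeasure M (Pair x -` A) * pmf p x)"
    by (rule nn_integral_measure_pmf_finite[OF fin]) auto
  also have "\<dots> = (\<Sum>x\<in>set_pmf p. ennreal (pmf p x * measure M (Pair x -` A)))"
    by (intro sum.cong refl) (simp add: emeasure_eq_measure ennreal_mult' mult.commute)
  also have "\<dots> = ennreal (\<Sum>x\<in>set_pmf p. pmf p x * measure M (Pair x -` A))"
    by (rule sum_ennreal) simp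
  finally have "measure (measure_pmf p \<Otimes>\<^sub>M M) A = (\<Sum>x\<in>set_pmf p. pmf p x * measure M (Pair x -` A))"
    by (simp add: measure_def sum_nonneg)
  also have "\<dots> = (\<Sum>x\<in>S. pmf p x * measure M (Pair x -` A))"
    by (rule sum.mono_neutral_left[OF S(1) S(2)]) (auto simp: set_pmf_eq)
  finally show ?thesis .
qed



lemma ratio_bound:
  fixes D D' xi Q :: real and m k :: nat
  assumes h: "0 \<le> D'" "D' \<le> D" "D \<le> 1/8" "D > 0" "xi \<ge> 100"
    and mm: "real m = 1 / (D\<^sup>2 * xi)" and Q: "Q \<ge> xi"
    and k: "k \<le> m" and ku: "real k > real m * (1/2+D') - sqrt (3 * real m * ln Q)"
  shows "(1/2+D')^k * (1/2-D')^(m-k) \<le> exp (5 * sqrt (3 * ln Q / xi)) * ((1/2+D)^k * (1/2-D)^(m-k))"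
proof -
  define mu where "mu = 1/2 + D"
  define mu' where "mu' = 1/2 + D'"
  define s where "s = sqrt (3 * real m * ln Q)"
  define t where "t = 5 * sqrt (3 * ln Q / xi)"
  define la where "la = ln mu' - ln mu"
  define lb where "lb = ln (1-mu') - ln (1-mu)"
  have pos: "mu > 0" "mu' > 0" "1 - mu > 0" "1 - mu' > 0" using h by (auto simp: mu_def mu'_def)
  have lnQ: "ln Q \<ge> 1"
  proof -
    have "exp 1 \<le> Q" using exp_le Q h by linarith
    thus ?thesis using ln_ge_iff[of Q 1] h Q by auto
  qed
  have s0: "s \<ge> 0" unfolding s_def using lnQ by simp
  have la1: "la \<le> mu'/mu - 1" unfolding la_def using pos ln_le_minus_one[of "mu'/mu"] by (simp add: ln_div)
  have la2: "- la \<le> mu/mu' - 1" unfolding la_def using pos ln_le_minus_one[of "mu/mu'"] by (simp add: ln_div)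
  have lb1: "lb \<le> (1-mu')/(1-mu) - 1" unfolding lb_def using pos ln_le_minus_one[of "(1-mu')/(1-mu)"] by (simp add: ln_div)
  have lbla0: "lb - la \<ge> 0"
  proof -
    have "mu' \<le> mu" using h by (simp add: mu_def mu'_def)
    hence "ln mu' \<le> ln mu" "ln (1-mu) \<le> ln (1-mu')" using pos by auto
    thus ?thesis unfolding la_def lb_def by simp
  qed
  have "D * D < 1/4" using h mult_mono[of D "1/8" D "1/8"] by auto
  have kl: "(1-mu') * lb + mu' * la \<le> D\<^sup>2 * (64/15)"
  proof -
    have "(1-mu') * lb + mu' * la \<le> (1-mu') * ((1-mu')/(1-mu) - 1) + mu' * (mu'/mu - 1)"
      using lb1 la1 pos by (intro add_mono mult_left_mono) auto
    also have "\<dots> = (D - D')\<^sup>2 / (1/4 - D\<^sup>2)"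
      using pos \<open>D * D < 1/4\<close> unfolding mu_def mu'_def by (simp add: field_simps power2_eq_square)
    also have "\<dots> \<le> D\<^sup>2 / (15/64)"
    proof (rule frac_le)
      show "(D - D')\<^sup>2 \<le> D\<^sup>2" using h by (intro power_mono) auto
      show "1/4 - D\<^sup>2 \<ge> 15/64" using h power_mono[of D "1/8" 2] by (auto simp: power2_eq_square)
    qed auto
    finally show ?thesis by simp
  qed
  have c: "lb - la \<le> 14 * D / 3"
  proof -
    have "lb - la \<le> ((1-mu')/(1-mu) - 1) + (mu/mu' - 1)" using lb1 la2 by linarith
    also have "\<dots> = (D - D')/(1/2 - D) + (D - D')/(1/2 + D')"
    proof -
      have "(1-mu')/(1-mu) - 1 = (D - D')/(1/2 - D)" using pos unfolding mu_def mu'_def by (simp add: field_simps)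
      moreover have "mu/mu' - 1 = (D - D')/(1/2 + D')" using pos unfolding mu_def mu'_def by (simp add: field_simps)
      ultimately show ?thesis by simp
    qed
    also have "\<dots> \<le> D / (3/8) + D / (1/2)"
      using h by (intro add_mono frac_le) auto
    finally show ?thesis by simp
  qed
  have sD: "s * D = sqrt (3 * ln Q / xi)"
  proof -
    have "s * D = sqrt (3 * real m * ln Q * D\<^sup>2)" unfolding s_def using h
      by (simp add: real_sqrt_mult)
    also have "3 * real m * ln Q * D\<^sup>2 = 3 * ln Q / xi" using mm h by (simp add: field_simps)
    finally show ?thesis .
  qed
  have mD: "real m * D\<^sup>2 = 1/xi" using mm h by (simp add: field_simps)
  have key: "(64/15) / xi \<le> (1/3) * sqrt (3 * ln Q / xi)"
  proof -
    have "((64/5) / xi)\<^sup>2 \<le> 3 * ln Q / xi"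
    proof -
      have "((64/5) / xi)\<^sup>2 = (64/5)^2 / xi / xi" by (simp add: power2_eq_square)
      also have "\<dots> \<le> 3 / xi" using h by (simp add: field_simps)
      also have "\<dots> \<le> 3 * ln Q / xi" using lnQ h by (simp add: divide_right_mono)
      finally show ?thesis .
    qed
    hence "(64/5) / xi \<le> sqrt (3 * ln Q / xi)" using h by (simp add: real_le_rsqrt)
    thus ?thesis by simp
  qed
  have kr: "real (m - k) = real m - real k" using k by simp
  have E: "real k * la + real (m-k) * lb \<le> t"
  proof -
    have "real k * la + real (m-k) * lb = real m * lb - real k * (lb - la)" unfolding kr by (simp add: algebra_simps)
    also have "\<dots> \<le> real m * lb - (real m * mu' - s) * (lb - la)"
      using ku lbla0 unfolding s_def mu'_def by (intro diff_left_mono mult_right_mono) auto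
    also have "\<dots> = real m * ((1-mu') * lb + mu' * la) + s * (lb - la)" by (simp add: algebra_simps)
    also have "\<dots> \<le> real m * (D\<^sup>2 * (64/15)) + s * (14 * D / 3)"
      using kl c s0 by (intro add_mono mult_left_mono) auto
    also have "\<dots> = (64/15) * (real m * D\<^sup>2) + (14/3) * (s * D)" by (simp add: algebra_simps)
    also have "\<dots> = (64/15) / xi + (14/3) * sqrt (3 * ln Q / xi)" using mD sD by simp
    also have "\<dots> \<le> t" using key unfolding t_def by simp
    finally show ?thesis .
  qed
  have L: "ln (mu'^k * (1-mu')^(m-k)) = real k * ln mu' + real (m-k) * ln (1-mu')"
    using pos by (simp add: ln_mult ln_realpow)
  have R: "ln (mu^k * (1-mu)^(m-k)) = real k * ln mu + real (m-k) * ln (1-mu)"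
    using pos by (simp add: ln_mult ln_realpow)
  have "mu'^k * (1-mu')^(m-k) = exp (ln (mu'^k * (1-mu')^(m-k)))" using pos by simp
  also have "\<dots> \<le> exp (t + ln (mu^k * (1-mu)^(m-k)))"
    unfolding L R using E unfolding la_def lb_def by (simp add: algebra_simps)
  also have "\<dots> = exp t * (mu^k * (1-mu)^(m-k))" using pos by (simp add: exp_add)
  finally show ?thesis unfolding mu_def mu'_def t_def by simp
qed



lemma pmf_bern_prod:
  assumes "0 \<le> mu" "mu \<le> 1" "\<forall>i. i \<notin> {0..<m} \<longrightarrow> \<not> f i"
  shows "pmf (bern_prod m mu) f = mu ^ card {i\<in>{0..<m}. f i} * (1-mu)^(m - card {i\<in>{0..<m}. f i})"
proof -
  define K where "K = {i\<in>{0..<m}. f i}"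
  have "pmf (bern_prod m mu) f = (\<Prod>i\<in>{0..<m}. pmf (bernoulli_pmf mu) (f i))"
    unfolding bern_prod_def using assms by (intro pmf_Pi') auto
  also have "\<dots> = (\<Prod>i\<in>{0..<m}. if f i then mu else 1 - mu)"
    using assms by (intro prod.cong) auto
  also have "\<dots> = (\<Prod>i\<in>{0..<m} \<inter> {i. f i}. mu) * (\<Prod>i\<in>{0..<m} \<inter> - {i. f i}. 1 - mu)"
    by (rule prod.If_cases) simp
  also have "\<dots> = mu ^ card ({0..<m} \<inter> {i. f i}) * (1-mu) ^ card ({0..<m} \<inter> - {i. f i})" by simp
  also have "{0..<m} \<inter> {i. f i} = K" unfolding K_def by auto
  also have "{0..<m} \<inter> - {i. f i} = {0..<m} - K" unfolding K_def by auto
  also have "card ({0..<m} - K) = m - card K"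
    unfolding K_def by (subst card_Diff_subset) auto
  finally show ?thesis unfolding K_def .
qed

lemma hoeff:
  assumes "0 \<le> mu" "mu \<le> 1" "m > 0" "s \<ge> 0"
  shows "measure (measure_pmf (bern_prod m mu)) {f. real (card {i\<in>{0..<m}. f i}) \<le> real m * mu - s}
     \<le> exp (-2 * s\<^sup>2 / m)"
proof -
  have eq: "binomial_pmf m mu = map_pmf (\<lambda>f. card {x\<in>{0..<m}. f x}) (bern_prod m mu)"
    unfolding bern_prod_def using assms by (intro binomial_pmf_altdef') auto
  have "measure (measure_pmf (bern_prod m mu)) {f. real (card {i\<in>{0..<m}. f i}) \<le> real m * mu - s}
      = measure (measure_pmf (binomial_pmf m mu)) {x. real x \<le> real m * mu - s}"
    unfolding eq by (simp add: vimage_def)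
  also have "\<dots> \<le> exp (-2 * s\<^sup>2 / m)"
    using binomial_distribution.prob_le[of mu m s] assms unfolding binomial_distribution_def by auto
  finally show ?thesis .
qed


theorem mainTheorem11:
  fixes \<Delta> \<Delta>' \<xi> \<gamma> Q :: real and m :: nat and M :: "'x measure"
    and A :: "((nat \<Rightarrow> bool) \<times> 'x) set"
  assumes "0 \<le> \<Delta>'" and "\<Delta>' \<le> \<Delta>" and "\<Delta> \<le> 1/8" and "\<Delta> > 0"
    and "\<xi> \<ge> 100"
    and "m > 0" and "real m = 1 / (\<Delta>\<^sup>2 * \<xi>)"
    and "prob_space M"
    and "A \<in> sets (measure_pmf (bern_prod m (1/2 + \<Delta>)) \<Otimes>\<^sub>M M)"
    and "measure (measure_pmf (bern_prod m (1/2 + \<Delta>)) \<Otimes>\<^sub>M M) A \<le> \<gamma>"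
    and "Q \<ge> \<xi>"
  shows "measure (measure_pmf (bern_prod m (1/2 + \<Delta>')) \<Otimes>\<^sub>M M) A
           \<le> \<gamma> * exp (5 * sqrt (3 * ln Q / \<xi>)) + Q powr (-6)"
proof -
  note h = assms
  define p where "p = bern_prod m (1/2 + \<Delta>)"
  define p' where "p' = bern_prod m (1/2 + \<Delta>')"
  define S where "S = {f::nat\<Rightarrow>bool. \<forall>i. i \<notin> {0..<m} \<longrightarrow> \<not> f i}"
  define t where "t = 5 * sqrt (3 * ln Q / \<xi>)"
  define s where "s = sqrt (3 * real m * ln Q)"
  define F where "F = (\<lambda>x. measure M (Pair x -` A))"
  define G where "G = {x\<in>S. pmf p' x \<le> exp t * pmf p x}"
  define H where "H = {f. real (card {i\<in>{0..<m}. f i}) \<le> real m * (1/2 + \<Delta>') - s}"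
  interpret M: prob_space M by fact
  have F01: "0 \<le> F x" "F x \<le> 1" for x unfolding F_def by auto
  have SP: "S = PiE_dflt {0..<m} False (\<lambda>_. UNIV)" unfolding S_def PiE_dflt_def by auto
  have finS: "finite S" unfolding SP by (intro finite_PiE_dflt) auto
  have sub: "set_pmf (bern_prod m mu) \<subseteq> S" for mu
    unfolding bern_prod_def S_def using set_Pi_pmf_subset[of "{0..<m}" False] by auto
  have A': "A \<in> sets (measure_pmf p' \<Otimes>\<^sub>M M)" using h(9) sets_pair_measure_cong[of "measure_pmf p'" "measure_pmf (bern_prod m (1/2 + \<Delta>))" M M] by simp
  have Pr: "measure (measure_pmf p \<Otimes>\<^sub>M M) A = (\<Sum>x\<in>S. pmf p x * F x)"
    unfolding F_def p_def using pair_pmf_measure[OF h(8) h(9) finS sub] .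
  have Pr': "measure (measure_pmf p' \<Otimes>\<^sub>M M) A = (\<Sum>x\<in>S. pmf p' x * F x)"
    unfolding F_def p'_def using pair_pmf_measure[OF h(8) A'[unfolded p'_def] finS sub] .
  have lnQ: "ln Q \<ge> 0" using h by simp
  have s0: "s \<ge> 0" unfolding s_def using lnQ by simp
  have GS: "G \<subseteq> S" unfolding G_def by auto
  have BH: "S - G \<subseteq> H"
  proof
    fix x assume x: "x \<in> S - G"
    show "x \<in> H"
    proof (rule ccontr)
      assume "x \<notin> H"
      define k where "k = card {i\<in>{0..<m}. x i}"
      have km: "k \<le> m" unfolding k_def using card_mono[of "{0..<m}" "{i\<in>{0..<m}. x i}"] by (auto simp: subset_iff)
      have ku: "real k > real m * (1/2+\<Delta>') - sqrt (3 * real m * ln Q)"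
        using \<open>x \<notin> H\<close> unfolding H_def k_def s_def by simp
      have xs: "\<forall>i. i \<notin> {0..<m} \<longrightarrow> \<not> x i" using x unfolding S_def by auto
      have "pmf p' x = (1/2+\<Delta>')^k * (1/2-\<Delta>')^(m-k)"
        unfolding p'_def k_def using h by (subst pmf_bern_prod[OF _ _ xs]) auto
      also have "\<dots> \<le> exp t * ((1/2+\<Delta>)^k * (1/2-\<Delta>)^(m-k))"
        unfolding t_def using ratio_bound[OF h(1-5) h(7) h(11) km ku] .
      also have "(1/2+\<Delta>)^k * (1/2-\<Delta>)^(m-k) = pmf p x"
        unfolding p_def k_def using h by (subst pmf_bern_prod[OF _ _ xs]) auto
      finally have "x \<in> G" using x unfolding G_def by auto
      thus False using x by auto
    qed
  qed
  have "(\<Sum>x\<in>S. pmf p' x * F x) = (\<Sum>x\<in>G. pmf p' x * F x) + (\<Sum>x\<in>S - G. pmf p' x * F x)"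
    using finS GS by (simp add: sum.subset_diff)
  also have "(\<Sum>x\<in>G. pmf p' x * F x) \<le> \<gamma> * exp t"
  proof -
    have "(\<Sum>x\<in>G. pmf p' x * F x) \<le> (\<Sum>x\<in>G. exp t * (pmf p x * F x))"
      using F01 by (intro sum_mono) (auto simp: G_def mult.assoc[symmetric] intro!: mult_right_mono)
    also have "\<dots> = exp t * (\<Sum>x\<in>G. pmf p x * F x)" by (simp add: sum_distrib_left)
    also have "(\<Sum>x\<in>G. pmf p x * F x) \<le> (\<Sum>x\<in>S. pmf p x * F x)"
      using finS GS F01 by (intro sum_mono2) auto
    also have "\<dots> \<le> \<gamma>" using Pr h(10) p_def by simp
    finally show ?thesis by (simp add: mult.commute)
  qed
  also have "(\<Sum>x\<in>S - G. pmf p' x * F x) \<le> Q powr (-6)"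
  proof -
    have "(\<Sum>x\<in>S - G. pmf p' x * F x) \<le> (\<Sum>x\<in>S - G. pmf p' x)"
      using F01 by (intro sum_mono) (auto intro: mult_left_le)
    also have "\<dots> = measure (measure_pmf p') (S - G)"
      using finS by (simp add: measure_measure_pmf_finite)
    also have "\<dots> \<le> measure (measure_pmf p') H"
      using BH by (intro measure_pmf.finite_measure_mono) auto
    also have "\<dots> \<le> exp (-2 * s\<^sup>2 / m)"
      unfolding H_def p'_def using h s0 by (intro hoeff) auto
    also have "-2 * s\<^sup>2 / m = -6 * ln Q" unfolding s_def using lnQ h(6) by simp
    also have "exp (-6 * ln Q) = Q powr (-6)" using h by (simp add: powr_def)
    finally show ?thesis .
  qed
  finally show ?thesis using Pr' p'_def t_def by simp
qed

end
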